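(* Let $h\in\mathbb N$ and $u,v\in\mathfrak S_n$ with $u<v$, and let $F$ be an $h$-flipclass of paths from $u$ to $v$. The following are equivalent: (1) the map $i_{TS_F}:F\to P^{TS_F}_h((u,0),(v,h))$ is bijective, i.e. every path of $TS_F$ from $(u,0)$ to $(v,h)$ is effective; (2) for all vertices $(a,i),(b,i+2)$ of $TS_F$ with $(a,i)\le(b,i+2)$ in the poset induced by $TS_F$, the interval $[(a,i),(b,i+2)]$ is a diamond (contains exactly two elements besides its endpoints); and the flip operators $\bar f_1,\dots,\bar f_{h-1}$ act transitively on $P^{TS_F}_h((u,0),(v,h))$, where $\bar f_i$ sends a path $((a_0,0),\dots,(a_h,h))$ to the path obtained by replacing $(a_i,i)$ by the other middle element of the diamond $[(a_{i-1},i-1),(a_{i+1},i+1)]$.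
   Context: $\mathfrak S_n$ is the symmetric group on $[n]$, $T$ its transpositions, $\ell$ the length w.r.t. simple transpositions. The Bruhat graph $B(\mathfrak S_n)$ has an edge $x\xrightarrow{t}y$ iff $yx^{-1}=t\in T$ and $\ell(x)<\ell(y)$; Bruhat order: $x\le y$ iff there is a directed path from $x$ to $y$. $P_h(u,v)$ is the set of paths $u=x_0\to\cdots\to x_h=v$ of length $h$. Between two fixed vertices there are $0$ or $2$ paths of length $2$, each the flip of the other; the $i$-th flip operator $f_i$ on $P_h(u,v)$ replaces $x_{i-1}\to x_i\to x_{i+1}$ by its flip; orbits of $\langle f_1,\dots,f_{h-1}\rangle$ on $P_h(u,v)$ are the $h$-flipclasses of paths from $u$ to $v$. The time-support graph $TS_F$ has vertices $(a,i)$ ($0\le i\le h$) such that some path $(x_0,\dots,x_h)\in F$ has $x_i=a$, and edges $(a,i)\xrightarrow{t}(b,i+1)$ whenever some path of $F$ contains $x_i=a\xrightarrow{t}b=x_{i+1}$; it is acyclic and induces a partial order (reachability) on its vertices. $P^{TS_F}_h((u,0),(v,h))$ is the set of paths of length $h$ from $(u,0)$ to $(v,h)$ in $TS_F$, and $i_{TS_F}$ sends $(x_0,\dots,x_h)\in F$ to $((x_0,0),\dots,(x_h,h))$ (it is always injective). A path of $TS_F$ is effective if it is a subpath of $i_{TS_F}(\Gamma)$ for some $\Gamma\in F$. *)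

theory Defs
  imports "HOL-Combinatorics.Combinatorics"
begin

type_synonym perm = "nat \<Rightarrow> nat"

definition Sn :: "nat \<Rightarrow> perm set" where
  "Sn n = {p. p permutes {1..n}}"

definition Trans :: "nat \<Rightarrow> perm set" where
  "Trans n = {Transposition.transpose i j | i j. i \<in> {1..n} \<and> j \<in> {1..n} \<and> i \<noteq> j}"

definition len :: "nat \<Rightarrow> perm \<Rightarrow> nat" where
  "len n x = (LEAST k. \<exists>ws. length ws = k \<and> set ws \<subseteq> {1..<n} \<and>
       x = foldr (\<lambda>i f. Transposition.transpose i (Suc i) \<circ> f) ws id)"

definition bedge :: "nat \<Rightarrow> perm \<Rightarrow> perm \<Rightarrow> bool" where
  "bedge n x y \<longleftrightarrow> x \<in> Sn n \<and> y \<in> Sn n \<and> y \<circ> inv x \<in> Trans n \<and> len n x < len n y"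

definition bruhat_less :: "nat \<Rightarrow> perm \<Rightarrow> perm \<Rightarrow> bool" where
  "bruhat_less n u v \<longleftrightarrow> (u, v) \<in> {(x, y). bedge n x y}\<^sup>+"

definition Paths :: "nat \<Rightarrow> nat \<Rightarrow> perm \<Rightarrow> perm \<Rightarrow> perm list set" where
  "Paths n h u v = {xs. length xs = Suc h \<and> xs ! 0 = u \<and> xs ! h = v \<and>
       (\<forall>i<h. bedge n (xs ! i) (xs ! Suc i))}"

definition other_mid :: "nat \<Rightarrow> perm \<Rightarrow> perm \<Rightarrow> perm \<Rightarrow> perm" where
  "other_mid n a c b = (THE y. y \<noteq> b \<and> bedge n a y \<and> bedge n y c)"

definition flip :: "nat \<Rightarrow> nat \<Rightarrow> perm list \<Rightarrow> perm list" where
  "flip n i xs = xs[i := other_mid n (xs ! (i - 1)) (xs ! Suc i) (xs ! i)]"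

definition flip_rel :: "nat \<Rightarrow> nat \<Rightarrow> perm \<Rightarrow> perm \<Rightarrow> (perm list \<times> perm list) set" where
  "flip_rel n h u v = {(xs, flip n i xs) | xs i. xs \<in> Paths n h u v \<and> 1 \<le> i \<and> i < h}"

text \<open>h-flipclasses: orbits of the group generated by the involutions f_1..f_{h-1} on P_h(u,v).\<close>
definition is_flipclass :: "nat \<Rightarrow> nat \<Rightarrow> perm \<Rightarrow> perm \<Rightarrow> perm list set \<Rightarrow> bool" where
  "is_flipclass n h u v F \<longleftrightarrow>
     (\<exists>xs \<in> Paths n h u v. F = {ys. (xs, ys) \<in> (flip_rel n h u v)\<^sup>*})"

definition TS_vert :: "nat \<Rightarrow> perm list set \<Rightarrow> (perm \<times> nat) set" where
  "TS_vert h F = {(xs ! i, i) | xs i. xs \<in> F \<and> i \<le> h}"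

definition TS_edge :: "nat \<Rightarrow> perm list set \<Rightarrow> ((perm \<times> nat) \<times> (perm \<times> nat)) set" where
  "TS_edge h F = {((xs ! i, i), (xs ! Suc i, Suc i)) | xs i. xs \<in> F \<and> i < h}"

definition TS_le :: "nat \<Rightarrow> perm list set \<Rightarrow> perm \<times> nat \<Rightarrow> perm \<times> nat \<Rightarrow> bool" where
  "TS_le h F p q \<longleftrightarrow> (p, q) \<in> (TS_edge h F)\<^sup>*"

definition TS_interval :: "nat \<Rightarrow> perm list set \<Rightarrow> perm \<times> nat \<Rightarrow> perm \<times> nat \<Rightarrow> (perm \<times> nat) set" where
  "TS_interval h F p q = {r \<in> TS_vert h F. TS_le h F p r \<and> TS_le h F r q}"

definition TS_paths :: "nat \<Rightarrow> perm list set \<Rightarrow> perm \<Rightarrow> perm \<Rightarrow> (perm \<times> nat) list set" where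
  "TS_paths h F u v = {ps. length ps = Suc h \<and> ps ! 0 = (u, 0) \<and> ps ! h = (v, h) \<and>
       (\<forall>i<h. (ps ! i, ps ! Suc i) \<in> TS_edge h F)}"

definition i_TS :: "nat \<Rightarrow> perm list \<Rightarrow> (perm \<times> nat) list" where
  "i_TS h xs = map (\<lambda>i. (xs ! i, i)) [0..<Suc h]"

definition TS_flip :: "nat \<Rightarrow> perm list set \<Rightarrow> nat \<Rightarrow> (perm \<times> nat) list \<Rightarrow> (perm \<times> nat) list" where
  "TS_flip h F i ps = ps[i := (THE s. s \<in> TS_interval h F (ps ! (i - 1)) (ps ! Suc i)
                                       - {ps ! (i - 1), ps ! Suc i, ps ! i})]"

definition TS_flip_rel :: "nat \<Rightarrow> perm list set \<Rightarrow> perm \<Rightarrow> perm \<Rightarrow> ((perm \<times> nat) list \<times> (perm \<times> nat) list) set" where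
  "TS_flip_rel h F u v = {(ps, TS_flip h F i ps) | ps i. ps \<in> TS_paths h F u v \<and> 1 \<le> i \<and> i < h}"

definition TS_flips_transitive :: "nat \<Rightarrow> perm list set \<Rightarrow> perm \<Rightarrow> perm \<Rightarrow> bool" where
  "TS_flips_transitive h F u v \<longleftrightarrow>
     (\<forall>ps \<in> TS_paths h F u v. \<forall>qs \<in> TS_paths h F u v. (ps, qs) \<in> (TS_flip_rel h F u v)\<^sup>*)"

end

theory Submission
  imports Defs
begin

definition disc :: "perm \<Rightarrow> nat \<Rightarrow> nat \<Rightarrow> nat" where
  "disc x k l = (if (k < l \<and> x l < x k) \<or> (l < k \<and> x k < x l) then 1 else 0)"

definition Dsum :: "nat \<Rightarrow> perm \<Rightarrow> nat" where
  "Dsum n x = (\<Sum>k\<in>{1..n}. \<Sum>l\<in>{1..n}. disc x k l)"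

lemma disc_sym: "disc x k l = disc x l k"
  by (auto simp: disc_def)

lemma disc_refl [simp]: "disc x k k = 0"
  by (auto simp: disc_def)

lemma sum3: "finite S \<Longrightarrow> p \<in> S \<Longrightarrow> q \<in> S \<Longrightarrow> p \<noteq> q \<Longrightarrow>
   sum g S = sum g (S - {p, q}) + g p + g q"
proof -
  assume a: "finite S" "p \<in> S" "q \<in> S" "p \<noteq> q"
  have "S = insert p (insert q (S - {p, q}))" using a by auto
  then have "sum g S = sum g (insert p (insert q (S - {p, q})))" by simp
  also have "\<dots> = g p + (g q + sum g (S - {p, q}))"
    using a by (simp add: sum.insert)
  finally show ?thesis by (simp add: add_ac)
qed

lemma DD_decomp:
  assumes "p \<in> {1..n}" "q \<in> {1..n}" "p \<noteq> q"
  shows "Dsum n x = (\<Sum>k\<in>{1..n}-{p,q}. \<Sum>l\<in>{1..n}-{p,q}. disc x k l)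
     + 2 * (\<Sum>m\<in>{1..n}-{p,q}. disc x p m + disc x q m) + 2 * disc x p q"
proof -
  let ?A = "{1..n}-{p,q}"
  have inner: "(\<Sum>l\<in>{1..n}. disc x k l) = (\<Sum>l\<in>?A. disc x k l) + disc x k p + disc x k q" for k
    using sum3[OF _ assms] by simp
  have "Dsum n x = (\<Sum>k\<in>?A. \<Sum>l\<in>{1..n}. disc x k l) + (\<Sum>l\<in>{1..n}. disc x p l)
       + (\<Sum>l\<in>{1..n}. disc x q l)"
    unfolding Dsum_def using sum3[OF _ assms] by simp
  also have "\<dots> = (\<Sum>k\<in>?A. (\<Sum>l\<in>?A. disc x k l) + disc x k p + disc x k q)
       + ((\<Sum>l\<in>?A. disc x p l) + disc x p q)
       + ((\<Sum>l\<in>?A. disc x q l) + disc x q p)"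
    by (simp only: inner disc_refl add_0_right)
  also have "\<dots> = (\<Sum>k\<in>?A. \<Sum>l\<in>?A. disc x k l) + (\<Sum>k\<in>?A. disc x p k + disc x q k)
       + ((\<Sum>l\<in>?A. disc x p l) + disc x p q)
       + ((\<Sum>l\<in>?A. disc x q l) + disc x p q)"
  proof -
    have e: "(\<Sum>k\<in>?A. disc x k p + disc x k q) = (\<Sum>k\<in>?A. disc x p k + disc x q k)"
      by (rule sum.cong) (auto simp: disc_def)
    have e2: "disc x q p = disc x p q" by (auto simp: disc_def)
    show ?thesis using e e2 by (simp add: sum.distrib add_ac)
  qed
  also have "\<dots> = (\<Sum>k\<in>?A. \<Sum>l\<in>?A. disc x k l)
     + 2 * (\<Sum>m\<in>?A. disc x p m + disc x q m) + 2 * disc x p q"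
    by (simp add: sum.distrib)
  finally show ?thesis .
qed

lemma DD_diff:
  assumes "p \<in> {1..n}" "q \<in> {1..n}" "p \<noteq> q" "\<And>m. m \<noteq> p \<Longrightarrow> m \<noteq> q \<Longrightarrow> y m = x m"
  shows "Dsum n y + 2 * (\<Sum>m\<in>{1..n}-{p,q}. disc x p m + disc x q m) + 2 * disc x p q
       = Dsum n x + 2 * (\<Sum>m\<in>{1..n}-{p,q}. disc y p m + disc y q m) + 2 * disc y p q"
proof -
  have "(\<Sum>k\<in>{1..n}-{p,q}. \<Sum>l\<in>{1..n}-{p,q}. disc y k l) = (\<Sum>k\<in>{1..n}-{p,q}. \<Sum>l\<in>{1..n}-{p,q}. disc x k l)"
    by (rule sum.cong, simp, rule sum.cong, simp) (auto simp: disc_def assms(4))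
  then show ?thesis using DD_decomp[OF assms(1-3), of x] DD_decomp[OF assms(1-3), of y] by simp
qed

lemma perm_facts:
  assumes "x permutes {1..n}" "i \<in> {1..n}"
  shows "inv x i \<in> {1..n}" "x (inv x i) = i"
proof -
  have ip: "inv x permutes {1..n}" using assms(1) by (rule permutes_inv)
  show "inv x i \<in> {1..n}" using permutes_in_image[OF ip, of i] assms(2) by simp
  show "x (inv x i) = i" using assms(1) by (simp add: permutes_inverses)
qed

lemma DD_adj:
  assumes x: "x permutes {1..n}" and i: "1 \<le> i" "i < n"
  defines "y \<equiv> Transposition.transpose i (Suc i) \<circ> x"
  shows "inv x i < inv x (Suc i) \<Longrightarrow> Dsum n y = Dsum n x + 2"
    and "inv x (Suc i) < inv x i \<Longrightarrow> Dsum n x = Dsum n y + 2"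
proof -
  let ?p = "inv x i" and ?q = "inv x (Suc i)"
  have pn: "?p \<in> {1..n}" "x ?p = i" using perm_facts[OF x, of i] i by auto
  have qn: "?q \<in> {1..n}" "x ?q = Suc i" using perm_facts[OF x, of "Suc i"] i by auto
  have pq: "?p \<noteq> ?q" using pn(2) qn(2) by (metis n_not_Suc_n)
  have xm: "x m \<noteq> i \<and> x m \<noteq> Suc i" if "m \<noteq> ?p" "m \<noteq> ?q" for m
    using that pn qn by (metis permutes_inverses(2)[OF x])
  have ag: "y m = x m" if "m \<noteq> ?p" "m \<noteq> ?q" for m
    using xm[OF that] by (simp add: y_def)
  have yp: "y ?p = Suc i" "y ?q = i" using pn qn by (auto simp: y_def)
  have s: "(\<Sum>m\<in>{1..n}-{?p,?q}. disc y ?p m + disc y ?q m) = (\<Sum>m\<in>{1..n}-{?p,?q}. disc x ?p m + disc x ?q m)"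
  proof (rule sum.cong)
    fix m assume "m \<in> {1..n}-{?p,?q}"
    then have "m \<noteq> ?p" "m \<noteq> ?q" by auto
    with xm ag have "x m \<noteq> i" "x m \<noteq> Suc i" "y m = x m" by auto
    then show "disc y ?p m + disc y ?q m = disc x ?p m + disc x ?q m"
      using yp pn qn by (auto simp: disc_def)
  qed simp
  have d: "Dsum n y + 2 * disc x ?p ?q = Dsum n x + 2 * disc y ?p ?q"
    using DD_diff[OF pn(1) qn(1) pq, of y x] ag s by simp
  have dx: "disc x ?p ?q = (if ?q < ?p then 1 else 0)"
    unfolding disc_def pn(2) qn(2) by auto
  have dy: "disc y ?p ?q = (if ?p < ?q then 1 else 0)"
    unfolding disc_def yp by auto
  show "?p < ?q \<Longrightarrow> Dsum n y = Dsum n x + 2"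
    using d unfolding dx dy by simp
  show "?q < ?p \<Longrightarrow> Dsum n x = Dsum n y + 2"
    using d unfolding dx dy by simp
qed

lemma disc_ineq:
  fixes p q m i j v :: nat
  assumes "i<j" "p<q" "v\<noteq>i" "v\<noteq>j" "m\<noteq>p" "m\<noteq>q"
  shows "(if (p<m \<and> v<i) \<or> (m<p \<and> i<v) then 1 else 0) + (if (q<m \<and> v<j) \<or> (m<q \<and> j<v) then 1 else 0)
    \<le> (if (p<m \<and> v<j) \<or> (m<p \<and> j<v) then 1 else 0) + (if (q<m \<and> v<i) \<or> (m<q \<and> i<v) then (1::nat) else 0)"
  using assms by (cases "m<p"; cases "m<q"; cases "v<i"; cases "v<j"; simp)

lemma DD_gen:
  assumes x: "x permutes {1..n}" and ij: "i \<in> {1..n}" "j \<in> {1..n}" "i < j"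
    and pq: "inv x i < inv x j"
  shows "Dsum n (Transposition.transpose i j \<circ> x) \<ge> Dsum n x + 2"
proof -
  define y where "y = Transposition.transpose i j \<circ> x"
  let ?p = "inv x i" and ?q = "inv x j"
  have pn: "?p \<in> {1..n}" "x ?p = i" using perm_facts[OF x, of i] ij by auto
  have qn: "?q \<in> {1..n}" "x ?q = j" using perm_facts[OF x, of j] ij by auto
  have pq': "?p \<noteq> ?q" using pq by simp
  have xm: "x m \<noteq> i \<and> x m \<noteq> j" if "m \<noteq> ?p" "m \<noteq> ?q" for m
    using that pn qn by (metis permutes_inverses(2)[OF x])
  have ag: "y m = x m" if "m \<noteq> ?p" "m \<noteq> ?q" for m
    using xm[OF that] by (simp add: y_def)
  have yp: "y ?p = j" "y ?q = i" using pn qn by (auto simp: y_def)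
  have s: "(\<Sum>m\<in>{1..n}-{?p,?q}. disc x ?p m + disc x ?q m) \<le> (\<Sum>m\<in>{1..n}-{?p,?q}. disc y ?p m + disc y ?q m)"
  proof (rule sum_mono)
    fix m assume "m \<in> {1..n}-{?p,?q}"
    then have "m \<noteq> ?p" "m \<noteq> ?q" by auto
    with xm ag have "x m \<noteq> i" "x m \<noteq> j" "y m = x m" by auto
    show "disc x ?p m + disc x ?q m \<le> disc y ?p m + disc y ?q m"
      unfolding disc_def pn(2) qn(2) yp \<open>y m = x m\<close>
      by (rule disc_ineq) (use pq ij \<open>x m \<noteq> i\<close> \<open>x m \<noteq> j\<close> \<open>m \<noteq> ?p\<close> \<open>m \<noteq> ?q\<close> in auto)
  qed
  have d: "Dsum n y + 2 * (\<Sum>m\<in>{1..n}-{?p,?q}. disc x ?p m + disc x ?q m) + 2 * disc x ?p ?q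
       = Dsum n x + 2 * (\<Sum>m\<in>{1..n}-{?p,?q}. disc y ?p m + disc y ?q m) + 2 * disc y ?p ?q"
    by (rule DD_diff[OF pn(1) qn(1) pq' ag])
  have "disc x ?p ?q = 0" "disc y ?p ?q = 1" using pn qn yp pq ij by (auto simp: disc_def)
  then show ?thesis using d s unfolding y_def[symmetric] by linarith
qed

definition W :: "nat list \<Rightarrow> perm" where
  "W ws = foldr (\<lambda>i f. Transposition.transpose i (Suc i) \<circ> f) ws id"

lemma W_Nil [simp]: "W [] = id" and W_Cons [simp]: "W (i # ws) = Transposition.transpose i (Suc i) \<circ> W ws"
  by (simp_all add: W_def)

lemma W_perm: "set ws \<subseteq> {1..<n} \<Longrightarrow> W ws permutes {1..n}"
proof (induction ws)
  case Nil show ?case unfolding W_Nil by (rule permutes_id)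
next
  case (Cons i ws)
  then have "i \<in> {1..n}" "Suc i \<in> {1..n}" by auto
  then have "Transposition.transpose i (Suc i) permutes {1..n}" by (rule permutes_swap_id)
  moreover have "W ws permutes {1..n}" using Cons by auto
  ultimately show ?case unfolding W_Cons by (rule permutes_compose[rotated])
qed

lemma DD_id [simp]: "Dsum n id = 0"
  unfolding Dsum_def disc_def by simp

lemma W_DD: "set ws \<subseteq> {1..<n} \<Longrightarrow> Dsum n (W ws) \<le> 2 * length ws"
proof (induction ws)
  case Nil show ?case unfolding W_Nil DD_id by simp
next
  case (Cons i ws)
  then have ws: "set ws \<subseteq> {1..<n}" and i: "1 \<le> i" "i < n" by auto
  have f: "W ws permutes {1..n}" using W_perm[OF ws] .
  have ne: "inv (W ws) i \<noteq> inv (W ws) (Suc i)"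
    by (metis f n_not_Suc_n permutes_inverses(1))
  have "Dsum n (Transposition.transpose i (Suc i) \<circ> W ws) \<le> Dsum n (W ws) + 2"
  proof (cases "inv (W ws) i < inv (W ws) (Suc i)")
    case True then show ?thesis using DD_adj(1)[OF f i] by simp
  next
    case False then have "inv (W ws) (Suc i) < inv (W ws) i" using ne by simp
    then show ?thesis using DD_adj(2)[OF f i] by simp
  qed
  then show ?case unfolding W_Cons length_Cons mult_Suc_right using Cons.IH[OF ws] by linarith
qed

lemma no_descent_id:
  assumes x: "x permutes {1..n}" and nd: "\<forall>i. 1 \<le> i \<and> i < n \<longrightarrow> inv x i < inv x (Suc i)"
  shows "x = id"
proof -
  have ip: "inv x permutes {1..n}" using x by (rule permutes_inv)
  have ge: "k \<le> inv x k" if "k \<in> {1..n}" for k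
    using that
  proof (induction k)
    case 0 then show ?case by simp
  next
    case (Suc k)
    show ?case
    proof (cases "k = 0")
      case True
      have "inv x (Suc k) \<in> {1..n}" using permutes_in_image[OF ip, of "Suc k"] Suc.prems by simp
      then show ?thesis using True by simp
    next
      case False
      then have "k \<in> {1..n}" using Suc.prems by auto
      then have "k \<le> inv x k" by (rule Suc.IH)
      moreover have "inv x k < inv x (Suc k)" using nd False Suc.prems by auto
      ultimately show ?thesis by simp
    qed
  qed
  have "inv x = id" using permutes_natset_ge[OF ip] ge by blast
  then show ?thesis using permutes_inv_inv[OF x] by (metis inv_id)
qed

lemma exists_word:
  "x permutes {1..n} \<Longrightarrow> \<exists>ws. set ws \<subseteq> {1..<n} \<and> x = W ws \<and> Dsum n x = 2 * length ws"
proof (induction "Dsum n x" arbitrary: x rule: less_induct)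
  case less
  show ?case
  proof (cases "x = id")
    case True then show ?thesis by (intro exI[of _ "[]"]) simp
  next
    case False
    then obtain i where i: "1 \<le> i" "i < n" and d: "\<not> inv x i < inv x (Suc i)"
      using no_descent_id[OF less.prems] by blast
    have ne: "inv x i \<noteq> inv x (Suc i)"
      by (metis less.prems n_not_Suc_n permutes_inverses(1))
    with d have d': "inv x (Suc i) < inv x i" by simp
    define y where "y = Transposition.transpose i (Suc i) \<circ> x"
    have y: "y permutes {1..n}" unfolding y_def
      using i by (intro permutes_compose[OF less.prems] permutes_swap_id) auto
    have dd: "Dsum n x = Dsum n y + 2" using DD_adj(2)[OF less.prems i d'] by (simp add: y_def)
    obtain ws where ws: "set ws \<subseteq> {1..<n}" "y = W ws" "Dsum n y = 2 * length ws"
      using less.hyps[of y] dd y by auto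
    have "x = Transposition.transpose i (Suc i) \<circ> y"
      by (simp add: y_def o_assoc)
    then show ?thesis using ws dd i
      by (intro exI[of _ "i # ws"]) auto
  qed
qed

lemma len_DD:
  assumes x: "x permutes {1..n}"
  shows "2 * len n x = Dsum n x"
proof -
  obtain ws0 where ws0: "set ws0 \<subseteq> {1..<n}" "x = W ws0" "Dsum n x = 2 * length ws0"
    using exists_word[OF x] by blast
  have "len n x = length ws0"
    unfolding len_def
  proof (rule Least_equality)
    show "\<exists>ws. length ws = length ws0 \<and> set ws \<subseteq> {1..<n} \<and>
       x = foldr (\<lambda>i f. Transposition.transpose i (Suc i) \<circ> f) ws id"
      using ws0 by (auto simp: W_def)
  next
    fix k assume "\<exists>ws. length ws = k \<and> set ws \<subseteq> {1..<n} \<and>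
       x = foldr (\<lambda>i f. Transposition.transpose i (Suc i) \<circ> f) ws id"
    then obtain ws where "length ws = k" "set ws \<subseteq> {1..<n}" "x = W ws" by (auto simp: W_def)
    then show "length ws0 \<le> k" using W_DD[of ws n] ws0 by simp
  qed
  then show ?thesis using ws0 by simp
qed

lemma inv_tcomp:
  assumes x: "x permutes S"
  shows "inv (Transposition.transpose e f \<circ> x) = inv x \<circ> Transposition.transpose e f"
  using o_inv_distrib[OF bij_transpose permutes_bij[OF x]] by simp

lemma len_trans_lt:
  assumes x: "x permutes {1..n}" and ef: "e \<in> {1..n}" "f \<in> {1..n}" "e < f"
  shows "len n x < len n (Transposition.transpose e f \<circ> x) \<longleftrightarrow> inv x e < inv x f"
proof -
  define y where "y = Transposition.transpose e f \<circ> x"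
  have y: "y permutes {1..n}" unfolding y_def
    using ef by (intro permutes_compose[OF x] permutes_swap_id) auto
  have ne: "inv x e \<noteq> inv x f"
    by (metis ef(3) x less_irrefl permutes_inverses(1))
  show ?thesis
  proof (cases "inv x e < inv x f")
    case True
    have "Dsum n y \<ge> Dsum n x + 2" using DD_gen[OF x ef True] by (simp add: y_def)
    then show ?thesis using True len_DD[OF x] len_DD[OF y] by (simp add: y_def)
  next
    case False
    then have lt: "inv x f < inv x e" using ne by simp
    have iy: "inv y = inv x \<circ> Transposition.transpose e f" unfolding y_def by (rule inv_tcomp[OF x])
    have "inv y e < inv y f" using lt iy by simp
    then have "Dsum n (Transposition.transpose e f \<circ> y) \<ge> Dsum n y + 2" using DD_gen[OF y ef] by simp
    moreover have "Transposition.transpose e f \<circ> y = x" by (simp add: y_def o_assoc)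
    ultimately have "Dsum n x \<ge> Dsum n y + 2" by simp
    then show ?thesis using False len_DD[OF x] len_DD[OF y] by (simp add: y_def)
  qed
qed

lemma len_trans:
  assumes x: "x permutes {1..n}" and ef: "e \<in> {1..n}" "f \<in> {1..n}" "e \<noteq> f"
  shows "len n x < len n (Transposition.transpose e f \<circ> x) \<longleftrightarrow> (e < f \<longleftrightarrow> inv x e < inv x f)"
proof (cases "e < f")
  case True then show ?thesis using len_trans_lt[OF x ef(1,2)] by simp
next
  case False
  then have "f < e" using ef by simp
  moreover have ne: "inv x e \<noteq> inv x f"
    by (metis ef(3) x permutes_inverses(1))
  ultimately show ?thesis using len_trans_lt[OF x ef(2,1)] False by (auto simp: transpose_commute)
qed

lemma bedge_trans:
  assumes x: "x \<in> Sn n" and ef: "e \<in> {1..n}" "f \<in> {1..n}" "e \<noteq> f"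
  shows "bedge n x (Transposition.transpose e f \<circ> x) \<longleftrightarrow> (e < f \<longleftrightarrow> inv x e < inv x f)"
proof -
  have xp: "x permutes {1..n}" using x by (simp add: Sn_def)
  have y: "Transposition.transpose e f \<circ> x permutes {1..n}"
    using ef by (intro permutes_compose[OF xp] permutes_swap_id) auto
  have "Transposition.transpose e f \<circ> x \<circ> inv x = Transposition.transpose e f"
    by (simp add: o_assoc[symmetric] permutes_inv_o[OF xp])
  moreover have "Transposition.transpose e f \<in> Trans n" using ef by (auto simp: Trans_def)
  ultimately show ?thesis using x y len_trans[OF xp ef] by (auto simp: bedge_def Sn_def)
qed

lemma bedge_form:
  assumes "bedge n x y"
  obtains e f where "e \<in> {1..n}" "f \<in> {1..n}" "e \<noteq> f" "y = Transposition.transpose e f \<circ> x"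
proof -
  from assms have x: "x permutes {1..n}" and t: "y \<circ> inv x \<in> Trans n" by (auto simp: bedge_def Sn_def)
  from t obtain e f where ef: "e \<in> {1..n}" "f \<in> {1..n}" "e \<noteq> f" "y \<circ> inv x = Transposition.transpose e f"
    by (auto simp: Trans_def)
  have "y = y \<circ> inv x \<circ> x" by (simp add: o_assoc[symmetric] permutes_inv_o[OF x])
  with ef show ?thesis using that by simp
qed

lemma Sn_perm: "x \<in> Sn n \<Longrightarrow> x permutes {1..n}" by (simp add: Sn_def)

lemma bedge_Sn: "bedge n x y \<Longrightarrow> x \<in> Sn n \<and> y \<in> Sn n" by (simp add: bedge_def)

lemma Sn_comp: "a \<in> Sn n \<Longrightarrow> e \<in> {1..n} \<Longrightarrow> f \<in> {1..n} \<Longrightarrow> Transposition.transpose e f \<circ> a \<in> Sn n"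
  unfolding Sn_def mem_Collect_eq by (rule permutes_compose[OF _ permutes_swap_id])

lemma cancel_right: "a permutes S \<Longrightarrow> f \<circ> a = g \<circ> a \<Longrightarrow> f = g"
  by (metis comp_id fun.map_comp permutes_inv_o(1))

lemma mid_shape:
  assumes a: "a \<in> Sn n" and ay: "bedge n a y" and yb: "bedge n y b" and b: "b = w \<circ> a" and w: "w \<noteq> id"
  shows "\<exists>e f. e \<in> {1..n} \<and> f \<in> {1..n} \<and> e \<noteq> f \<and> y = Transposition.transpose e f \<circ> a \<and>
     w e \<noteq> e \<and> w f \<noteq> f \<and> (w \<circ> Transposition.transpose e f) \<circ> (w \<circ> Transposition.transpose e f) = id"
proof -
  obtain e f where ef: "e \<in> {1..n}" "f \<in> {1..n}" "e \<noteq> f" "y = Transposition.transpose e f \<circ> a"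
    using bedge_form[OF ay] by metis
  obtain g h where gh: "g \<in> {1..n}" "h \<in> {1..n}" "g \<noteq> h" "b = Transposition.transpose g h \<circ> y"
    using bedge_form[OF yb] by metis
  have "(Transposition.transpose g h \<circ> Transposition.transpose e f) \<circ> a = w \<circ> a"
    using gh(4) ef(4) b by (simp add: o_assoc)
  then have wgh: "Transposition.transpose g h \<circ> Transposition.transpose e f = w"
    using cancel_right[OF Sn_perm[OF a]] by blast
  then have wef: "w \<circ> Transposition.transpose e f = Transposition.transpose g h"
    by (metis comp_id o_assoc transpose_comp_involutory)
  have inv: "(w \<circ> Transposition.transpose e f) \<circ> (w \<circ> Transposition.transpose e f) = id"
    unfolding wef by simp
  have s1: "w e \<noteq> e"
  proof
    assume "w e = e"
    then have "Transposition.transpose g h f = e" using wgh[symmetric] by simp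
    then have "(f = g \<and> e = h) \<or> (f = h \<and> e = g)" using ef(3) by (auto simp: transpose_eq_iff)
    then have "Transposition.transpose g h = Transposition.transpose e f" by (auto simp: transpose_commute)
    then show False using wgh w by simp
  qed
  have s2: "w f \<noteq> f"
  proof
    assume "w f = f"
    then have "Transposition.transpose g h e = f" using wgh[symmetric] by simp
    then have "(e = g \<and> f = h) \<or> (e = h \<and> f = g)" using ef(3) by (auto simp: transpose_eq_iff)
    then have "Transposition.transpose g h = Transposition.transpose e f" by (auto simp: transpose_commute)
    then show False using wgh w by simp
  qed
  show ?thesis using ef s1 s2 inv by blast
qed

lemma arith3:
  fixes al be de A B C :: nat
  assumes "al \<noteq> be" "be \<noteq> de" "al \<noteq> de" "A \<noteq> B" "B \<noteq> C" "A \<noteq> C"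
    and "(al < be \<longleftrightarrow> A < B)" "(be < de \<longleftrightarrow> A < C)"
  shows "((be < de \<longleftrightarrow> B < C) \<and> (al < de \<longleftrightarrow> A < B)) \<longleftrightarrow>
         \<not> ((al < de \<longleftrightarrow> A < C) \<and> (al < be \<longleftrightarrow> C < B))"
  using assms by (cases "al < be"; cases "be < de"; cases "al < de"; cases "A < B"; cases "B < C"; cases "A < C"; simp)

lemma inv_inj_perm: "a permutes S \<Longrightarrow> inv a x = inv a y \<Longrightarrow> x = y"
  by (metis permutes_inverses(1))

lemma core3:
  assumes a: "a \<in> Sn n" and abd: "\<alpha> \<in> {1..n}" "\<beta> \<in> {1..n}" "\<delta> \<in> {1..n}" "\<alpha> \<noteq> \<beta>" "\<beta> \<noteq> \<delta>" "\<alpha> \<noteq> \<delta>"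
    and c: "c = Transposition.transpose \<alpha> \<beta> \<circ> a" and b: "b = Transposition.transpose \<beta> \<delta> \<circ> c"
    and e1: "bedge n a c" and e2: "bedge n c b"
  shows "card {y. bedge n a y \<and> bedge n y b} = 2"
proof -
  let ?M = "{y. bedge n a y \<and> bedge n y b}"
  have ap: "a permutes {1..n}" using a by (rule Sn_perm)
  define \<pi> where "\<pi> = inv a"
  have pinj: "\<pi> x \<noteq> \<pi> y" if "x \<noteq> y" for x y
    using that inv_inj_perm[OF ap] unfolding \<pi>_def by blast
  have c1: "\<alpha> < \<beta> \<longleftrightarrow> \<pi> \<alpha> < \<pi> \<beta>"
    using e1 bedge_trans[OF a abd(1,2,4)] c by (simp add: \<pi>_def)
  have cS: "c \<in> Sn n" using c Sn_comp[OF a abd(1,2)] by simp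
  have ic: "inv c = \<pi> \<circ> Transposition.transpose \<alpha> \<beta>"
    unfolding c \<pi>_def by (rule inv_tcomp[OF ap])
  have c2: "\<beta> < \<delta> \<longleftrightarrow> \<pi> \<alpha> < \<pi> \<delta>"
    using e2 bedge_trans[OF cS abd(2,3,5)] b ic abd by simp
  define y2 where "y2 = Transposition.transpose \<beta> \<delta> \<circ> a"
  define y3 where "y3 = Transposition.transpose \<alpha> \<delta> \<circ> a"
  have y2S: "y2 \<in> Sn n" using Sn_comp[OF a abd(2,3)] by (simp add: y2_def)
  have y3S: "y3 \<in> Sn n" using Sn_comp[OF a abd(1,3)] by (simp add: y3_def)
  have b2: "b = Transposition.transpose \<alpha> \<delta> \<circ> y2"
    unfolding b c y2_def by (rule ext) (use abd in \<open>auto simp: transpose_def\<close>)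
  have b3: "b = Transposition.transpose \<alpha> \<beta> \<circ> y3"
    unfolding b c y3_def by (rule ext) (use abd in \<open>auto simp: transpose_def\<close>)
  have iy2: "inv y2 = \<pi> \<circ> Transposition.transpose \<beta> \<delta>"
    unfolding y2_def \<pi>_def by (rule inv_tcomp[OF ap])
  have iy3: "inv y3 = \<pi> \<circ> Transposition.transpose \<alpha> \<delta>"
    unfolding y3_def \<pi>_def by (rule inv_tcomp[OF ap])
  have m2: "y2 \<in> ?M \<longleftrightarrow> (\<beta> < \<delta> \<longleftrightarrow> \<pi> \<beta> < \<pi> \<delta>) \<and> (\<alpha> < \<delta> \<longleftrightarrow> \<pi> \<alpha> < \<pi> \<beta>)"
  proof -
    have "bedge n a y2 \<longleftrightarrow> (\<beta> < \<delta> \<longleftrightarrow> \<pi> \<beta> < \<pi> \<delta>)"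
      using bedge_trans[OF a abd(2,3,5)] by (simp add: y2_def \<pi>_def)
    moreover have "bedge n y2 b \<longleftrightarrow> (\<alpha> < \<delta> \<longleftrightarrow> \<pi> \<alpha> < \<pi> \<beta>)"
      using bedge_trans[OF y2S abd(1,3,6)] b2 iy2 abd by simp
    ultimately show ?thesis by simp
  qed
  have m3: "y3 \<in> ?M \<longleftrightarrow> (\<alpha> < \<delta> \<longleftrightarrow> \<pi> \<alpha> < \<pi> \<delta>) \<and> (\<alpha> < \<beta> \<longleftrightarrow> \<pi> \<delta> < \<pi> \<beta>)"
  proof -
    have "bedge n a y3 \<longleftrightarrow> (\<alpha> < \<delta> \<longleftrightarrow> \<pi> \<alpha> < \<pi> \<delta>)"
      using bedge_trans[OF a abd(1,3,6)] by (simp add: y3_def \<pi>_def)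
    moreover have "bedge n y3 b \<longleftrightarrow> (\<alpha> < \<beta> \<longleftrightarrow> \<pi> \<delta> < \<pi> \<beta>)"
      using bedge_trans[OF y3S abd(1,2,4)] b3 iy3 abd by simp
    ultimately show ?thesis by simp
  qed
  have x23: "y2 \<in> ?M \<longleftrightarrow> y3 \<notin> ?M"
    unfolding m2 m3
    by (rule arith3) (use abd pinj c1 c2 in auto)
  have cM: "c \<in> ?M" using e1 e2 by simp
  define w where "w = Transposition.transpose \<beta> \<delta> \<circ> Transposition.transpose \<alpha> \<beta>"
  have bw: "b = w \<circ> a" unfolding b c w_def by (simp add: o_assoc)
  have wne: "w \<noteq> id"
  proof
    assume "w = id"
    then have "w \<alpha> = \<alpha>" by simp
    then show False using abd by (simp add: w_def)
  qed
  have wfix: "w x = x" if "x \<noteq> \<alpha>" "x \<noteq> \<beta>" "x \<noteq> \<delta>" for x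
    using that by (simp add: w_def)
  have sub: "?M \<subseteq> {c, y2, y3}"
  proof
    fix y assume "y \<in> ?M"
    then have ay: "bedge n a y" and yb: "bedge n y b" by auto
    obtain e f where ef: "e \<noteq> f" "y = Transposition.transpose e f \<circ> a" "w e \<noteq> e" "w f \<noteq> f"
      using mid_shape[OF a ay yb bw wne] by blast
    have "e \<in> {\<alpha>, \<beta>, \<delta>}" "f \<in> {\<alpha>, \<beta>, \<delta>}" using ef wfix by blast+
    then have "Transposition.transpose e f \<in> {Transposition.transpose \<alpha> \<beta>, Transposition.transpose \<beta> \<delta>, Transposition.transpose \<alpha> \<delta>}"
      using ef(1) by (auto simp: transpose_commute)
    then show "y \<in> {c, y2, y3}" using ef(2) by (auto simp: c y2_def y3_def)
  qed
  have tne: "Transposition.transpose e f \<circ> a \<noteq> Transposition.transpose g h \<circ> a"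
    if "Transposition.transpose e f g \<noteq> Transposition.transpose g h g" for e f g h
    using that cancel_right[OF ap] by metis
  have d12: "c \<noteq> y2" unfolding c y2_def by (rule tne) (use abd in simp)
  have d13: "c \<noteq> y3" unfolding c y3_def by (rule tne) (use abd in simp)
  have d23: "y2 \<noteq> y3" unfolding y2_def y3_def by (rule tne) (use abd in simp)
  show ?thesis
  proof (cases "y2 \<in> ?M")
    case True
    then have "?M = {c, y2}" using x23 sub cM by auto
    then show ?thesis using d12 by simp
  next
    case False
    then have "?M = {c, y3}" using x23 sub cM by auto
    then show ?thesis using d13 by simp
  qed
qed

lemma core4:
  assumes a: "a \<in> Sn n" and abd: "\<alpha> \<in> {1..n}" "\<beta> \<in> {1..n}" "\<gamma> \<in> {1..n}" "\<delta> \<in> {1..n}"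
    and dist: "\<alpha> \<noteq> \<beta>" "\<alpha> \<noteq> \<gamma>" "\<alpha> \<noteq> \<delta>" "\<beta> \<noteq> \<gamma>" "\<beta> \<noteq> \<delta>" "\<gamma> \<noteq> \<delta>"
    and c: "c = Transposition.transpose \<alpha> \<beta> \<circ> a" and b: "b = Transposition.transpose \<gamma> \<delta> \<circ> c"
    and e1: "bedge n a c" and e2: "bedge n c b"
  shows "card {y. bedge n a y \<and> bedge n y b} = 2"
proof -
  let ?M = "{y. bedge n a y \<and> bedge n y b}"
  have ap: "a permutes {1..n}" using a by (rule Sn_perm)
  define \<pi> where "\<pi> = inv a"
  have c1: "\<alpha> < \<beta> \<longleftrightarrow> \<pi> \<alpha> < \<pi> \<beta>"
    using e1 bedge_trans[OF a abd(1,2) dist(1)] c by (simp add: \<pi>_def)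
  have cS: "c \<in> Sn n" using c Sn_comp[OF a abd(1,2)] by simp
  have ic: "inv c = \<pi> \<circ> Transposition.transpose \<alpha> \<beta>"
    unfolding c \<pi>_def by (rule inv_tcomp[OF ap])
  have c2: "\<gamma> < \<delta> \<longleftrightarrow> \<pi> \<gamma> < \<pi> \<delta>"
    using e2 bedge_trans[OF cS abd(3,4) dist(6)] b ic dist by simp
  define y2 where "y2 = Transposition.transpose \<gamma> \<delta> \<circ> a"
  have y2S: "y2 \<in> Sn n" using Sn_comp[OF a abd(3,4)] by (simp add: y2_def)
  have b2: "b = Transposition.transpose \<alpha> \<beta> \<circ> y2"
    unfolding b c y2_def by (rule ext) (use dist in \<open>auto simp: transpose_def\<close>)
  have iy2: "inv y2 = \<pi> \<circ> Transposition.transpose \<gamma> \<delta>"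
    unfolding y2_def \<pi>_def by (rule inv_tcomp[OF ap])
  have y2M: "y2 \<in> ?M"
  proof -
    have "bedge n a y2"
      using bedge_trans[OF a abd(3,4) dist(6)] c2 by (simp add: y2_def \<pi>_def)
    moreover have "bedge n y2 b"
      using bedge_trans[OF y2S abd(1,2) dist(1)] b2 iy2 dist c1 by simp
    ultimately show ?thesis by simp
  qed
  have cM: "c \<in> ?M" using e1 e2 by simp
  define w where "w = Transposition.transpose \<gamma> \<delta> \<circ> Transposition.transpose \<alpha> \<beta>"
  have bw: "b = w \<circ> a" unfolding b c w_def by (simp add: o_assoc)
  have wne: "w \<noteq> id"
  proof
    assume "w = id"
    then have "w \<alpha> = \<alpha>" by simp
    then show False using dist by (simp add: w_def)
  qed
  have wfix: "w x = x" if "x \<noteq> \<alpha>" "x \<noteq> \<beta>" "x \<noteq> \<gamma>" "x \<noteq> \<delta>" for x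
    using that by (simp add: w_def)
  have sub: "?M \<subseteq> {c, y2}"
  proof
    fix y assume "y \<in> ?M"
    then have ay: "bedge n a y" and yb: "bedge n y b" by auto
    obtain e f where ef: "e \<noteq> f" "y = Transposition.transpose e f \<circ> a" "w e \<noteq> e" "w f \<noteq> f"
      and inv: "(w \<circ> Transposition.transpose e f) \<circ> (w \<circ> Transposition.transpose e f) = id"
      using mid_shape[OF a ay yb bw wne] by blast
    have ein: "e \<in> {\<alpha>, \<beta>, \<gamma>, \<delta>}" and fin: "f \<in> {\<alpha>, \<beta>, \<gamma>, \<delta>}" using ef wfix by blast+
    have ev: "w (Transposition.transpose e f (w (Transposition.transpose e f e))) = e"
      using fun_cong[OF inv, of e] by simp
    have "Transposition.transpose e f \<in> {Transposition.transpose \<alpha> \<beta>, Transposition.transpose \<gamma> \<delta>}"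
      using ein fin ef(1) ev dist by (auto simp: transpose_commute w_def)
    then show "y \<in> {c, y2}" using ef(2) by (auto simp: c y2_def)
  qed
  have tne: "Transposition.transpose e f \<circ> a \<noteq> Transposition.transpose g h \<circ> a"
    if "Transposition.transpose e f g \<noteq> Transposition.transpose g h g" for e f g h
    using that cancel_right[OF ap] by metis
  have d12: "c \<noteq> y2" unfolding c y2_def by (rule tne) (use dist in simp)
  have "?M = {c, y2}" using sub cM y2M by auto
  then show ?thesis using d12 by simp
qed

lemma two_mid:
  assumes e1: "bedge n a c" and e2: "bedge n c b"
  shows "card {y. bedge n a y \<and> bedge n y b} = 2"
proof -
  have a: "a \<in> Sn n" using e1 bedge_Sn by blast
  obtain \<alpha> \<beta> where ab: "\<alpha> \<in> {1..n}" "\<beta> \<in> {1..n}" "\<alpha> \<noteq> \<beta>" and c: "c = Transposition.transpose \<alpha> \<beta> \<circ> a"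
    using bedge_form[OF e1] by metis
  obtain \<gamma> \<delta> where gd: "\<gamma> \<in> {1..n}" "\<delta> \<in> {1..n}" "\<gamma> \<noteq> \<delta>" and b: "b = Transposition.transpose \<gamma> \<delta> \<circ> c"
    using bedge_form[OF e2] by metis
  have notsame: "\<not> ({\<gamma>, \<delta>} = {\<alpha>, \<beta>})"
  proof
    assume "{\<gamma>, \<delta>} = {\<alpha>, \<beta>}"
    then have "Transposition.transpose \<gamma> \<delta> = Transposition.transpose \<alpha> \<beta>"
      by (metis doubleton_eq_iff transpose_commute)
    then have "b = a" using b c by (simp add: o_assoc)
    moreover have "len n a < len n c" "len n c < len n b" using e1 e2 by (auto simp: bedge_def)
    ultimately show False by simp
  qed
  show ?thesis
  proof (cases "\<gamma> \<notin> {\<alpha>, \<beta>} \<and> \<delta> \<notin> {\<alpha>, \<beta>}")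
    case True
    then show ?thesis
      using core4[OF a ab(1,2) gd(1,2) ab(3) _ _ _ _ gd(3) c b e1 e2] by auto
  next
    case False
    then consider "\<gamma> = \<beta>" "\<delta> \<noteq> \<alpha>" | "\<delta> = \<beta>" "\<gamma> \<noteq> \<alpha>" | "\<gamma> = \<alpha>" "\<delta> \<noteq> \<beta>" | "\<delta> = \<alpha>" "\<gamma> \<noteq> \<beta>"
      using notsame gd(3) ab(3) by blast
    then show ?thesis
    proof cases
      case 1
      then show ?thesis using core3[OF a ab(1,2) gd(2) ab(3) _ _ c _ e1 e2] gd(3) b by auto
    next
      case 2
      have b': "b = Transposition.transpose \<beta> \<gamma> \<circ> c" using b 2 by (simp add: transpose_commute)
      show ?thesis using core3[OF a ab(1,2) gd(1) ab(3) _ _ c b' e1 e2] gd(3) 2 by auto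
    next
      case 3
      have c': "c = Transposition.transpose \<beta> \<alpha> \<circ> a" using c by (simp add: transpose_commute)
      have b': "b = Transposition.transpose \<alpha> \<delta> \<circ> c" using b 3 by simp
      show ?thesis using core3[OF a ab(2,1) gd(2) ab(3)[symmetric] _ _ c' b' e1 e2] gd(3) 3 by auto
    next
      case 4
      have c': "c = Transposition.transpose \<beta> \<alpha> \<circ> a" using c by (simp add: transpose_commute)
      have b': "b = Transposition.transpose \<alpha> \<gamma> \<circ> c" using b 4 by (simp add: transpose_commute)
      show ?thesis using core3[OF a ab(2,1) gd(1) ab(3)[symmetric] _ _ c' b' e1 e2] gd(3) 4 by auto
    qed
  qed
qed

lemma om:
  assumes e1: "bedge n a m" and e2: "bedge n m b"
  shows "other_mid n a b m \<noteq> m" "bedge n a (other_mid n a b m)" "bedge n (other_mid n a b m) b"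
    "other_mid n a b (other_mid n a b m) = m"
proof -
  let ?M = "{y. bedge n a y \<and> bedge n y b}"
  have c2: "card ?M = 2" by (rule two_mid[OF e1 e2])
  have fin: "finite ?M" by (rule card_ge_0_finite) (simp add: c2)
  have mM: "m \<in> ?M" using e1 e2 by simp
  have "card (?M - {m}) = 1" using c2 mM fin by (simp add: card_Diff_singleton)
  then obtain m' where m'0: "?M - {m} = {m'}" by (rule card_1_singletonE)
  have m'in: "m' \<in> ?M - {m}" using m'0 by simp
  then have m'M: "bedge n a m'" "bedge n m' b" "m' \<noteq> m" by simp_all
  have all: "y = m \<or> y = m'" if "bedge n a y" "bedge n y b" for y
  proof (cases "y = m")
    case False
    then have "y \<in> ?M - {m}" using that by simp
    then show ?thesis using m'0 by simp
  qed simp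
  have o: "other_mid n a b m = m'"
    unfolding other_mid_def
  proof (rule the_equality)
    show "m' \<noteq> m \<and> bedge n a m' \<and> bedge n m' b" using m'M by simp
    fix y assume "y \<noteq> m \<and> bedge n a y \<and> bedge n y b"
    then show "y = m'" using all by blast
  qed
  show "other_mid n a b m \<noteq> m" "bedge n a (other_mid n a b m)" "bedge n (other_mid n a b m) b"
    unfolding o using m'M by simp_all
  have o2: "other_mid n a b m' = m"
    unfolding other_mid_def
  proof (rule the_equality)
    show "m \<noteq> m' \<and> bedge n a m \<and> bedge n m b" using m'M e1 e2 by simp
    fix y assume "y \<noteq> m' \<and> bedge n a y \<and> bedge n y b"
    then show "y = m" using all by blast
  qed
  show "other_mid n a b (other_mid n a b m) = m" using o o2 by simp
qed

lemma flip_props: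
  assumes xs: "xs \<in> Paths n h u v" and i: "1 \<le> i" "i < h"
  shows "flip n i xs \<in> Paths n h u v" "flip n i xs ! i \<noteq> xs ! i"
    "\<And>k. k \<noteq> i \<Longrightarrow> flip n i xs ! k = xs ! k" "flip n i (flip n i xs) = xs"
    "length (flip n i xs) = Suc h"
proof -
  have len: "length xs = Suc h" and e: "\<And>k. k < h \<Longrightarrow> bedge n (xs ! k) (xs ! Suc k)"
    and x0: "xs ! 0 = u" and xh: "xs ! h = v"
  proof -
    have P: "length xs = Suc h \<and> xs ! 0 = u \<and> xs ! h = v \<and> (\<forall>k<h. bedge n (xs ! k) (xs ! Suc k))"
      using xs unfolding Paths_def by (rule CollectD)
    then show "length xs = Suc h" "xs ! 0 = u" "xs ! h = v" by (rule conjunct1, blast, blast)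
    fix k assume "k < h" then show "bedge n (xs ! k) (xs ! Suc k)" using P by blast
  qed
  define a where "a = xs ! (i - 1)"
  define b where "b = xs ! Suc i"
  define m where "m = xs ! i"
  have e1: "bedge n a m" using e[of "i - 1"] i by (simp add: a_def m_def)
  have e2: "bedge n m b" using e[of i] i by (simp add: b_def m_def)
  define m' where "m' = other_mid n a b m"
  have fl: "flip n i xs = xs[i := m']" by (simp add: flip_def a_def b_def m_def m'_def)
  have flk: "flip n i xs ! k = (if k = i then m' else xs ! k)" if "k < Suc h" for k
    using that len i by (simp add: fl nth_list_update)
  show lenf: "length (flip n i xs) = Suc h" using len by (simp add: fl)
  show ne: "flip n i xs ! i \<noteq> xs ! i" using flk[of i] i om(1)[OF e1 e2] by (simp add: m'_def m_def)
  show oth: "\<And>k. k \<noteq> i \<Longrightarrow> flip n i xs ! k = xs ! k" by (simp add: fl)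
  have fi: "flip n i xs ! i = m'" using flk[of i] i by simp
  show "flip n i xs \<in> Paths n h u v"
    unfolding Paths_def
  proof (intro CollectI conjI allI impI)
    show "length (flip n i xs) = Suc h" by (rule lenf)
    show "flip n i xs ! 0 = u" using oth[of 0] i x0 by simp
    show "flip n i xs ! h = v" using oth[of h] i xh by simp
    fix k assume k: "k < h"
    consider "k = i - 1" | "k = i" | "k \<noteq> i - 1" "k \<noteq> i" by blast
    then show "bedge n (flip n i xs ! k) (flip n i xs ! Suc k)"
    proof cases
      case 1
      then have "flip n i xs ! k = a" "flip n i xs ! Suc k = m'" using oth[of k] fi i by (auto simp: a_def)
      then show ?thesis using om(2)[OF e1 e2] by (simp add: m'_def)
    next
      case 2
      then have "flip n i xs ! k = m'" "flip n i xs ! Suc k = b" using oth[of "Suc k"] fi i by (auto simp: b_def)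
      then show ?thesis using om(3)[OF e1 e2] by (simp add: m'_def)
    next
      case 3
      then have "Suc k \<noteq> i" by auto
      then show ?thesis using oth[of k] oth[of "Suc k"] 3 e[OF k] by simp
    qed
  qed
  show "flip n i (flip n i xs) = xs"
  proof -
    have f1: "(flip n i xs) ! (i - 1) = a" using oth[of "i - 1"] i by (simp add: a_def)
    have f2: "(flip n i xs) ! Suc i = b" using oth[of "Suc i"] by (simp add: b_def)
    have o4: "other_mid n a b m' = m" using om(4)[OF e1 e2] by (simp add: m'_def)
    have "flip n i (flip n i xs) = (flip n i xs)[i := other_mid n a b m']"
      by (simp only: flip_def[of n i "flip n i xs"] f1 f2 fi)
    then have "flip n i (flip n i xs) = (flip n i xs)[i := m]" by (simp only: o4)
    moreover have "(flip n i xs)[i := m] = xs" unfolding fl m_def by simp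
    ultimately show ?thesis by simp
  qed
qed

locale fc =
  fixes n h u v F xs0
  assumes xs0: "xs0 \<in> Paths n h u v" and F: "F = {ys. (xs0, ys) \<in> (flip_rel n h u v)\<^sup>*}"
begin

abbreviation "R \<equiv> flip_rel n h u v"

lemma R_Paths: "(x, y) \<in> R \<Longrightarrow> x \<in> Paths n h u v \<and> y \<in> Paths n h u v"
  by (auto simp: flip_rel_def flip_props(1))

lemma R_sym: "(x, y) \<in> R \<Longrightarrow> (y, x) \<in> R"
proof -
  assume "(x, y) \<in> R"
  then obtain i where i: "x \<in> Paths n h u v" "1 \<le> i" "i < h" "y = flip n i x" by (auto simp: flip_rel_def)
  then have "y \<in> Paths n h u v" "flip n i y = x" using flip_props by auto
  then show "(y, x) \<in> R" using i unfolding flip_rel_def by blast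
qed

lemma F_Paths: "ys \<in> F \<Longrightarrow> ys \<in> Paths n h u v"
proof -
  assume "ys \<in> F"
  then have "(xs0, ys) \<in> R\<^sup>*" by (simp add: F)
  then show ?thesis
    by (induction rule: rtrancl_induct) (auto simp: xs0 dest: R_Paths)
qed

lemma xs0F: "xs0 \<in> F" by (simp add: F)

lemma F_closed: "ys \<in> F \<Longrightarrow> (ys, zs) \<in> R\<^sup>* \<Longrightarrow> zs \<in> F"
  by (simp add: F)

lemma F_flip: "ys \<in> F \<Longrightarrow> 1 \<le> i \<Longrightarrow> i < h \<Longrightarrow> flip n i ys \<in> F"
proof -
  assume a: "ys \<in> F" "1 \<le> i" "i < h"
  then have "(ys, flip n i ys) \<in> R" using F_Paths unfolding flip_rel_def by blast
  then show ?thesis using F_closed[OF a(1)] by blast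
qed

lemma F_conn: "ys \<in> F \<Longrightarrow> zs \<in> F \<Longrightarrow> (ys, zs) \<in> R\<^sup>*"
proof -
  assume y: "ys \<in> F" and z: "zs \<in> F"
  have "(xs0, ys) \<in> R\<^sup>*" using y by (simp add: F)
  then have "(ys, xs0) \<in> R\<^sup>*"
  proof (induction rule: rtrancl_induct)
    case base then show ?case by simp
  next
    case (step y z)
    then show ?case using R_sym by (meson converse_rtrancl_into_rtrancl)
  qed
  moreover have "(xs0, zs) \<in> R\<^sup>*" using z by (simp add: F)
  ultimately show ?thesis by simp
qed

end

context fc
begin

abbreviation "E \<equiv> TS_edge h F"
abbreviation "V \<equiv> TS_vert h F"

lemma F_facts:
  assumes "xs \<in> F"
  shows "length xs = Suc h" "xs ! 0 = u" "xs ! h = v" "\<And>k. k < h \<Longrightarrow> bedge n (xs ! k) (xs ! Suc k)"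
proof -
  have P: "length xs = Suc h \<and> xs ! 0 = u \<and> xs ! h = v \<and> (\<forall>k<h. bedge n (xs ! k) (xs ! Suc k))"
    using F_Paths[OF assms] unfolding Paths_def by (rule CollectD)
  then show "length xs = Suc h" "xs ! 0 = u" "xs ! h = v" by (rule conjunct1, blast, blast)
  fix k assume "k < h" then show "bedge n (xs ! k) (xs ! Suc k)" using P by blast
qed

lemma edge_iff: "((a, i), (c, j)) \<in> E \<longleftrightarrow> j = Suc i \<and> i < h \<and> (\<exists>xs\<in>F. xs ! i = a \<and> xs ! Suc i = c)"
  unfolding TS_edge_def by blast

lemma edge_snd: "(p, q) \<in> E \<Longrightarrow> snd q = Suc (snd p) \<and> snd p < h"
  using edge_iff[of "fst p" "snd p" "fst q" "snd q"] by simp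

lemma vert_iff: "(a, i) \<in> V \<longleftrightarrow> i \<le> h \<and> (\<exists>xs\<in>F. xs ! i = a)"
  unfolding TS_vert_def by blast

lemma edge_vert: "(p, q) \<in> E \<Longrightarrow> p \<in> V \<and> q \<in> V"
proof -
  assume "(p, q) \<in> E"
  then obtain xs k where "xs \<in> F" "k < h" "p = (xs ! k, k)" "q = (xs ! Suc k, Suc k)"
    unfolding TS_edge_def by blast
  then show ?thesis unfolding TS_vert_def by force
qed

lemma relpow_snd: "(p, q) \<in> E ^^ k \<Longrightarrow> snd q = snd p + k"
proof (induction k arbitrary: q)
  case 0 then show ?case by simp
next
  case (Suc k)
  then obtain r where "(p, r) \<in> E ^^ k" "(r, q) \<in> E" by (blast elim: relpow_Suc_E)
  then show ?case using Suc.IH edge_snd by fastforce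
qed

lemma rtr_k: "(p, q) \<in> E\<^sup>* \<Longrightarrow> \<exists>k. (p, q) \<in> E ^^ k \<and> snd q = snd p + k"
  using rtrancl_power relpow_snd by blast

lemma E2: "(p, q) \<in> E ^^ 2 \<Longrightarrow> \<exists>r. (p, r) \<in> E \<and> (r, q) \<in> E"
  by (auto simp: numeral_2_eq_2 elim!: relpow_Suc_E)

lemma interval_sub:
  assumes r: "r \<in> TS_interval h F (a, i) (b, i + 2) - {(a, i), (b, i + 2)}"
  shows "\<exists>y. r = (y, Suc i) \<and> ((a, i), (y, Suc i)) \<in> E \<and> ((y, Suc i), (b, i + 2)) \<in> E"
proof -
  from r have l1: "((a, i), r) \<in> E\<^sup>*" and l2: "(r, (b, i + 2)) \<in> E\<^sup>*"
    and n1: "r \<noteq> (a, i)" and n2: "r \<noteq> (b, i + 2)"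
    unfolding TS_interval_def TS_le_def by auto
  obtain k1 where k1: "((a, i), r) \<in> E ^^ k1" "snd r = i + k1" using rtr_k[OF l1] by auto
  obtain k2 where k2: "(r, (b, i + 2)) \<in> E ^^ k2" "i + 2 = snd r + k2" using rtr_k[OF l2] by auto
  have "k1 \<noteq> 0" using k1 n1 by (cases k1) auto
  moreover have "k2 \<noteq> 0" using k2 n2 by (cases k2) auto
  ultimately have "k1 = 1" "k2 = 1" using k1(2) k2(2) by auto
  then have "((a, i), r) \<in> E" "(r, (b, i + 2)) \<in> E" "snd r = Suc i" using k1 k2 by auto
  then show ?thesis by (metis prod.collapse)
qed

lemma i_TS_len [simp]: "length (i_TS h xs) = Suc h"
  by (simp add: i_TS_def)

lemma i_TS_nth [simp]: "k < Suc h \<Longrightarrow> i_TS h xs ! k = (xs ! k, k)"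
  unfolding i_TS_def by (simp add: nth_map del: upt_Suc)

lemma i_TS_in: "xs \<in> F \<Longrightarrow> i_TS h xs \<in> TS_paths h F u v"
  unfolding TS_paths_def using F_facts[of xs] by (auto simp: TS_edge_def)

lemma i_TS_inj: "inj_on (i_TS h) F"
proof (rule inj_onI)
  fix xs ys assume xs: "xs \<in> F" and ys: "ys \<in> F" and eq: "i_TS h xs = i_TS h ys"
  show "xs = ys"
  proof (rule nth_equalityI)
    show "length xs = length ys" using F_facts(1)[OF xs] F_facts(1)[OF ys] by simp
    fix k assume "k < length xs"
    then have "k < Suc h" using F_facts(1)[OF xs] by simp
    then show "xs ! k = ys ! k" using arg_cong[OF eq, of "\<lambda>l. l ! k"] by simp
  qed
qed

lemma TS_paths_snd: "ps \<in> TS_paths h F u v \<Longrightarrow> k \<le> h \<Longrightarrow> snd (ps ! k) = k"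
proof (induction k)
  case 0 then show ?case by (simp add: TS_paths_def)
next
  case (Suc k)
  then have "(ps ! k, ps ! Suc k) \<in> E" by (simp add: TS_paths_def)
  then show ?case using Suc edge_snd by fastforce
qed

lemma TS_paths_form: "ps \<in> TS_paths h F u v \<Longrightarrow> ps = i_TS h (map fst ps)"
proof -
  assume ps: "ps \<in> TS_paths h F u v"
  then have len: "length ps = Suc h" by (simp add: TS_paths_def)
  show ?thesis
  proof (rule nth_equalityI)
    show "length ps = length (i_TS h (map fst ps))" using len by simp
    fix k assume "k < length ps"
    then have k: "k < Suc h" using len by simp
    then have "snd (ps ! k) = k" using TS_paths_snd[OF ps] by simp
    then show "ps ! k = i_TS h (map fst ps) ! k" using k len by (simp add: prod_eq_iff)
  qed
qed

definition DIA :: bool where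
  "DIA \<longleftrightarrow> (\<forall>a b i. (a, i) \<in> TS_vert h F \<and> (b, i + 2) \<in> TS_vert h F \<and> TS_le h F (a, i) (b, i + 2)
              \<longrightarrow> card (TS_interval h F (a, i) (b, i + 2) - {(a, i), (b, i + 2)}) = 2)"

lemma K:
  assumes dia: DIA and G: "G \<in> F" and i: "1 \<le> i" "i < h"
  shows "TS_flip h F i (i_TS h G) = i_TS h (flip n i G)"
proof -
  define j where "j = i - 1"
  have ij: "i = Suc j" "Suc i = j + 2" using i by (auto simp: j_def)
  define G' where "G' = flip n i G"
  have G'F: "G' \<in> F" using F_flip[OF G i] by (simp add: G'_def)
  have Gp: "G \<in> Paths n h u v" using F_Paths[OF G] .
  have G'oth: "G' ! k = G ! k" if "k \<noteq> i" for k using flip_props(3)[OF Gp i that] by (simp add: G'_def)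
  have G'ne: "G' ! i \<noteq> G ! i" using flip_props(2)[OF Gp i] by (simp add: G'_def)
  define A where "A = (G ! j, j)"
  define B where "B = (G ! (j + 2), j + 2)"
  have e1: "(A, (G ! i, i)) \<in> E" "((G ! i, i), B) \<in> E"
    unfolding A_def B_def edge_iff using G i ij by (auto intro!: bexI[of _ G])
  have e2: "(A, (G' ! i, i)) \<in> E" "((G' ! i, i), B) \<in> E"
    unfolding A_def B_def edge_iff using G'F i ij G'oth[of j] G'oth[of "j + 2"]
    by (auto intro!: bexI[of _ G'])
  have AV: "A \<in> V" and BV: "B \<in> V" using edge_vert e1 by blast+
  have le: "TS_le h F A B" unfolding TS_le_def using e1 by (meson rtrancl.rtrancl_into_rtrancl r_into_rtrancl)
  let ?X = "TS_interval h F A B - {A, B}"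
  have c2: "card ?X = 2" using dia AV BV le unfolding DIA_def A_def B_def by blast
  have inX: "r \<in> ?X" if "(A, r) \<in> E" "(r, B) \<in> E" for r
  proof -
    have "r \<in> V" using edge_vert that by blast
    moreover have "TS_le h F A r" "TS_le h F r B" unfolding TS_le_def using that by auto
    moreover have "snd r = Suc j" using edge_snd[OF that(1)] by (simp add: A_def)
    ultimately show ?thesis unfolding TS_interval_def A_def B_def by auto
  qed
  have r1: "(G ! i, i) \<in> ?X" using inX e1 by blast
  have r2: "(G' ! i, i) \<in> ?X" using inX e2 by blast
  have fin: "finite ?X" by (rule card_ge_0_finite) (simp add: c2)
  have X: "?X = {(G ! i, i), (G' ! i, i)}"
  proof -
    have sub: "{(G ! i, i), (G' ! i, i)} \<subseteq> ?X" using r1 r2 by blast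
    have "card {(G ! i, i), (G' ! i, i)} = 2" using G'ne by simp
    then show ?thesis using card_subset_eq[OF fin sub] c2 by simp
  qed
  let ?ps = "i_TS h G"
  have p1: "?ps ! (i - 1) = A" using i by (simp add: A_def j_def)
  have p2: "?ps ! Suc i = B" using i ij by (simp add: B_def)
  have p3: "?ps ! i = (G ! i, i)" using i by simp
  have set: "TS_interval h F (?ps ! (i - 1)) (?ps ! Suc i) - {?ps ! (i - 1), ?ps ! Suc i, ?ps ! i}
      = {(G' ! i, i)}"
    unfolding p1 p2 p3 using X G'ne by auto
  have "TS_flip h F i ?ps = ?ps[i := (G' ! i, i)]"
    unfolding TS_flip_def set by simp
  also have "\<dots> = i_TS h G'"
  proof (rule nth_equalityI)
    show "length (?ps[i := (G' ! i, i)]) = length (i_TS h G')" by simp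
    fix k assume "k < length (?ps[i := (G' ! i, i)])"
    then have k: "k < Suc h" by simp
    show "?ps[i := (G' ! i, i)] ! k = i_TS h G' ! k"
      using k i G'oth[of k] by (cases "k = i") (auto simp: nth_list_update)
  qed
  finally show ?thesis by (simp add: G'_def)
qed

end

context fc
begin

lemma through:
  assumes aV: "(a, i) \<in> V" and bV: "(b, i + 2) \<in> V"
    and e1: "((a, i), (c, Suc i)) \<in> E" and e2: "((c, Suc i), (b, i + 2)) \<in> E"
  shows "\<exists>ps \<in> TS_paths h F u v. ps ! i = (a, i) \<and> ps ! Suc i = (c, Suc i) \<and> ps ! (i + 2) = (b, i + 2)"
proof -
  obtain G1 where G1: "G1 \<in> F" "G1 ! i = a" and ih: "i \<le> h" using aV unfolding vert_iff by blast
  obtain G2 where G2: "G2 \<in> F" "G2 ! (i + 2) = b" and i2h: "i + 2 \<le> h" using bV unfolding vert_iff by blast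
  define f where "f k = (if k \<le> i then (G1 ! k, k) else if k = Suc i then (c, Suc i) else (G2 ! k, k))" for k
  define ps where "ps = map f [0..<Suc h]"
  have psk: "ps ! k = f k" if "k < Suc h" for k
    using that unfolding ps_def by (simp add: nth_map del: upt_Suc)
  have len: "length ps = Suc h" by (simp add: ps_def)
  have edges: "(ps ! k, ps ! Suc k) \<in> E" if k: "k < h" for k
  proof -
    have pk: "ps ! k = f k" "ps ! Suc k = f (Suc k)" using k psk by auto
    consider "Suc k \<le> i" | "k = i" | "k = Suc i" | "Suc i < k" by linarith
    then show ?thesis
    proof cases
      case 1
      then have eq: "f k = (G1 ! k, k)" "f (Suc k) = (G1 ! Suc k, Suc k)" by (simp_all add: f_def)
      show ?thesis unfolding pk eq edge_iff using G1(1) k by blast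
    next
      case 2
      then show ?thesis unfolding pk f_def using e1 G1(2) by simp
    next
      case 3
      then have "f (Suc k) = (b, i + 2)" using G2(2) by (simp add: f_def)
      then show ?thesis unfolding pk using e2 3 by (simp add: f_def)
    next
      case 4
      then have eq: "f k = (G2 ! k, k)" "f (Suc k) = (G2 ! Suc k, Suc k)" by (simp_all add: f_def)
      show ?thesis unfolding pk eq edge_iff using G2(1) k by blast
    qed
  qed
  have "ps \<in> TS_paths h F u v"
    unfolding TS_paths_def
  proof (intro CollectI conjI allI impI)
    show "length ps = Suc h" by (rule len)
    show "ps ! 0 = (u, 0)" using psk[of 0] F_facts(2)[OF G1(1)] by (simp add: f_def)
    show "ps ! h = (v, h)" using psk[of h] F_facts(3)[OF G2(1)] i2h by (simp add: f_def)
    fix k assume "k < h" then show "(ps ! k, ps ! Suc k) \<in> E" by (rule edges)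
  qed
  moreover have "ps ! i = (a, i)" using psk[of i] ih G1 by (simp add: f_def)
  moreover have "ps ! Suc i = (c, Suc i)" using psk[of "Suc i"] i2h by (simp add: f_def)
  moreover have "ps ! (i + 2) = (b, i + 2)" using psk[of "i + 2"] i2h G2 by (simp add: f_def)
  ultimately show ?thesis by blast
qed

lemma edge_bedge1: "((a, i), (y, Suc i)) \<in> E \<Longrightarrow> bedge n a y"
proof -
  assume "((a, i), (y, Suc i)) \<in> E"
  then obtain xs where "xs \<in> F" "i < h" "xs ! i = a" "xs ! Suc i = y"
    unfolding edge_iff by blast
  then show ?thesis using F_facts(4) by blast
qed

lemma edge_bedge2: "((y, Suc i), (b, i + 2)) \<in> E \<Longrightarrow> bedge n y b"
proof -
  assume "((y, Suc i), (b, i + 2)) \<in> E"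
  then obtain xs where "xs \<in> F" "Suc i < h" "xs ! Suc i = y" "xs ! Suc (Suc i) = b"
    unfolding edge_iff by auto
  then show ?thesis using F_facts(4) by blast
qed

lemma inX:
  assumes "((a, i), r) \<in> E" "(r, (b, i + 2)) \<in> E"
  shows "r \<in> TS_interval h F (a, i) (b, i + 2) - {(a, i), (b, i + 2)}"
proof -
  have "r \<in> V" using edge_vert assms by blast
  moreover have "TS_le h F (a, i) r" "TS_le h F r (b, i + 2)" unfolding TS_le_def using assms by auto
  moreover have "snd r = Suc i" using edge_snd[OF assms(1)] by simp
  ultimately show ?thesis unfolding TS_interval_def by auto
qed

lemma fwd_DIA:
  assumes surj: "TS_paths h F u v \<subseteq> i_TS h ` F"
  shows DIA
  unfolding DIA_def
proof (intro allI impI)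
  fix a b i
  assume H: "(a, i) \<in> V \<and> (b, i + 2) \<in> V \<and> TS_le h F (a, i) (b, i + 2)"
  let ?X = "TS_interval h F (a, i) (b, i + 2) - {(a, i), (b, i + 2)}"
  have aV: "(a, i) \<in> V" and bV: "(b, i + 2) \<in> V" and l: "((a, i), (b, i + 2)) \<in> E\<^sup>*"
    using H unfolding TS_le_def by blast+
  obtain k where k: "((a, i), (b, i + 2)) \<in> E ^^ k" "snd (b, i + 2) = snd (a, i) + k"
    using rtr_k[OF l] by blast
  from k(2) have "k = 2" by simp
  with k(1) have "((a, i), (b, i + 2)) \<in> E ^^ 2" by simp
  then obtain r where r: "((a, i), r) \<in> E" "(r, (b, i + 2)) \<in> E" using E2 by blast
  have "snd r = Suc i" using edge_snd[OF r(1)] by simp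
  then obtain c where rc: "r = (c, Suc i)" by (metis prod.collapse)
  have r1: "((a, i), (c, Suc i)) \<in> E" and r2: "((c, Suc i), (b, i + 2)) \<in> E" using r rc by simp_all
  obtain ps where ps: "ps \<in> TS_paths h F u v" "ps ! i = (a, i)" "ps ! Suc i = (c, Suc i)" "ps ! (i + 2) = (b, i + 2)"
    using through[OF aV bV r1 r2] by blast
  obtain G where G: "G \<in> F" "ps = i_TS h G" using surj ps(1) by blast
  have i2h: "i + 2 \<le> h" using bV unfolding vert_iff by blast
  have "(G ! i, i) = (a, i)" using ps(2) G(2) i2h by simp
  moreover have "(G ! Suc i, Suc i) = (c, Suc i)" using ps(3) G(2) i2h by simp
  moreover have "(G ! (i + 2), i + 2) = (b, i + 2)" using ps(4) G(2) i2h by simp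
  ultimately have Ga: "G ! i = a" "G ! Suc i = c" "G ! Suc (Suc i) = b" by simp_all
  have ih: "1 \<le> Suc i" "Suc i < h" using i2h by auto
  have Gp: "G \<in> Paths n h u v" using F_Paths[OF G(1)] .
  define G' where "G' = flip n (Suc i) G"
  have G'F: "G' \<in> F" using F_flip[OF G(1) ih] by (simp add: G'_def)
  have "G' ! i = G ! i" unfolding G'_def by (rule flip_props(3)[OF Gp ih]) simp
  moreover have "G' ! Suc (Suc i) = G ! Suc (Suc i)" unfolding G'_def by (rule flip_props(3)[OF Gp ih]) simp
  moreover have "G' ! Suc i \<noteq> G ! Suc i" unfolding G'_def by (rule flip_props(2)[OF Gp ih])
  ultimately have G'o: "G' ! i = a" "G' ! Suc (Suc i) = b" "G' ! Suc i \<noteq> c" using Ga by simp_all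
  have ih2: "i < h" using ih by simp
  have ei1: "((a, i), (G' ! Suc i, Suc i)) \<in> E"
    using ih2 by (simp add: edge_iff) (use G'F G'o(1) in blast)
  have ei2: "((G' ! Suc i, Suc i), (b, i + 2)) \<in> E"
    using ih by (simp add: edge_iff) (use G'F G'o(2) in blast)
  have x1: "(c, Suc i) \<in> ?X" using inX[OF r1 r2] .
  have x2: "(G' ! Suc i, Suc i) \<in> ?X" using inX[OF ei1 ei2] .
  have bac: "bedge n a c" "bedge n c b" using edge_bedge1[OF r1] edge_bedge2[OF r2] by simp_all
  let ?BM = "{y. bedge n a y \<and> bedge n y b}"
  have cBM: "card ?BM = 2" by (rule two_mid[OF bac])
  have finBM: "finite ?BM" by (rule card_ge_0_finite) (simp add: cBM)
  have sub: "?X \<subseteq> (\<lambda>y. (y, Suc i)) ` ?BM"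
  proof
    fix s assume "s \<in> ?X"
    then obtain y where "s = (y, Suc i)" "((a, i), (y, Suc i)) \<in> E" "((y, Suc i), (b, i + 2)) \<in> E"
      using interval_sub by blast
    then show "s \<in> (\<lambda>y. (y, Suc i)) ` ?BM" using edge_bedge1 edge_bedge2 by blast
  qed
  have finX: "finite ?X" using finite_subset[OF sub] finBM by blast
  have "card ?X \<le> card ((\<lambda>y. (y, Suc i)) ` ?BM)" using card_mono[OF _ sub] finBM by simp
  also have "\<dots> \<le> 2" using card_image_le[OF finBM, of "\<lambda>y. (y, Suc i)"] cBM by simp
  finally have le2: "card ?X \<le> 2" .
  have "card {(c, Suc i), (G' ! Suc i, Suc i)} = 2" using G'o(3) by simp
  moreover have "card {(c, Suc i), (G' ! Suc i, Suc i)} \<le> card ?X"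
  proof (rule card_mono[OF finX])
    show "{(c, Suc i), (G' ! Suc i, Suc i)} \<subseteq> ?X" using x1 x2 by simp
  qed
  ultimately show "card ?X = 2" using le2 by simp
qed

lemma lift:
  assumes dia: DIA and R: "(G, G') \<in> R\<^sup>*" and G: "G \<in> F"
  shows "(i_TS h G, i_TS h G') \<in> (TS_flip_rel h F u v)\<^sup>*"
  using R
proof (induction rule: rtrancl_induct)
  case base then show ?case by simp
next
  case (step y z)
  have yF: "y \<in> F" using F_closed[OF G step(1)] .
  obtain i where i: "1 \<le> i" "i < h" "z = flip n i y" using step(2) unfolding flip_rel_def by blast
  have "(i_TS h y, TS_flip h F i (i_TS h y)) \<in> TS_flip_rel h F u v"
    unfolding TS_flip_rel_def using i_TS_in[OF yF] i by blast
  then have "(i_TS h y, i_TS h z) \<in> TS_flip_rel h F u v" using K[OF dia yF i(1,2)] i(3) by simp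
  then show ?case using step(3) by simp
qed

lemma fwd:
  assumes "bij_betw (i_TS h) F (TS_paths h F u v)"
  shows "DIA \<and> TS_flips_transitive h F u v"
proof -
  have img: "i_TS h ` F = TS_paths h F u v" using assms by (simp add: bij_betw_def)
  have dia: DIA using fwd_DIA img by simp
  have "TS_flips_transitive h F u v"
    unfolding TS_flips_transitive_def
  proof (intro ballI)
    fix ps qs assume "ps \<in> TS_paths h F u v" "qs \<in> TS_paths h F u v"
    then obtain G G' where "G \<in> F" "G' \<in> F" "ps = i_TS h G" "qs = i_TS h G'" using img by blast
    then show "(ps, qs) \<in> (TS_flip_rel h F u v)\<^sup>*" using lift[OF dia F_conn] by blast
  qed
  with dia show ?thesis by simp
qed

lemma reach_img:
  assumes dia: DIA and "(q0, q) \<in> (TS_flip_rel h F u v)\<^sup>*" and "q0 \<in> i_TS h ` F"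
  shows "q \<in> i_TS h ` F"
  using assms(2,3)
proof (induction rule: rtrancl_induct)
  case base then show ?case by simp
next
  case (step y z)
  obtain i where i: "1 \<le> i" "i < h" "z = TS_flip h F i y" using step(2) unfolding TS_flip_rel_def by blast
  obtain G where G: "G \<in> F" "y = i_TS h G" using step(3) step(4) by blast
  have "z = i_TS h (flip n i G)" using K[OF dia G(1) i(1,2)] i(3) G(2) by simp
  then show ?case using F_flip[OF G(1) i(1,2)] by blast
qed

lemma bwd:
  assumes dia: DIA and tr: "TS_flips_transitive h F u v"
  shows "bij_betw (i_TS h) F (TS_paths h F u v)"
  unfolding bij_betw_def
proof
  show "inj_on (i_TS h) F" by (rule i_TS_inj)
  show "i_TS h ` F = TS_paths h F u v"
  proof
    show "i_TS h ` F \<subseteq> TS_paths h F u v" using i_TS_in by blast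
    show "TS_paths h F u v \<subseteq> i_TS h ` F"
    proof
      fix ps assume ps: "ps \<in> TS_paths h F u v"
      have q0: "i_TS h xs0 \<in> TS_paths h F u v" using i_TS_in[OF xs0F] .
      have "(i_TS h xs0, ps) \<in> (TS_flip_rel h F u v)\<^sup>*" using tr q0 ps unfolding TS_flips_transitive_def by blast
      then show "ps \<in> i_TS h ` F" using reach_img[OF dia] xs0F by blast
    qed
  qed
qed

lemma main: "bij_betw (i_TS h) F (TS_paths h F u v) \<longleftrightarrow> DIA \<and> TS_flips_transitive h F u v"
  using fwd bwd by blast

end

theorem lemma5p7:
  fixes n h :: nat and u v :: perm and F :: "perm list set"
  assumes "u \<in> Sn n" and "v \<in> Sn n" and "bruhat_less n u v"
    and "is_flipclass n h u v F"
  shows "bij_betw (i_TS h) F (TS_paths h F u v) \<longleftrightarrow>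
         ((\<forall>a b i. (a, i) \<in> TS_vert h F \<and> (b, i + 2) \<in> TS_vert h F \<and> TS_le h F (a, i) (b, i + 2)
              \<longrightarrow> card (TS_interval h F (a, i) (b, i + 2) - {(a, i), (b, i + 2)}) = 2)
          \<and> TS_flips_transitive h F u v)"
proof -
  from assms(4) obtain xs0 where xs0: "xs0 \<in> Paths n h u v"
    and Fd: "F = {ys. (xs0, ys) \<in> (flip_rel n h u v)\<^sup>*}"
    unfolding is_flipclass_def by blast
  interpret fc n h u v F xs0 by (rule fc.intro[OF xs0 Fd])
  show ?thesis using main unfolding DIA_def .
qed

end
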